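(* Let $\mathbb W=(W,I,\preccurlyeq,\circ,{}^\sim,{}^-)$ be a DInFL-frame and let $\mathsf{Up}(W,\preccurlyeq)$ be the set of all upsets of $(W,\preccurlyeq)$. For $U\in\mathsf{Up}(W,\preccurlyeq)$ define ${\sim}U=\{w\in W\mid w^-\notin U\}$ and $-U=\{w\in W\mid w^\sim\notin U\}$. Then $\mathsf{Up}(W,\preccurlyeq)$ is closed under $\cap,\cup,\circ,{\sim},-$, contains $I$, and $\mathbb W^+=(\mathsf{Up}(W,\preccurlyeq),\cap,\cup,\circ,I,\sim,-)$ is a distributive InFL-algebra (DInFL-algebra).
   Context: For a set $W$ and a map $\circ:W\times W\to\mathcal P(W)$, extend $\circ$ to subsets by $U\circ V=\bigcup\{a\circ b\mid a\in U,\ b\in V\}$, with $x\circ V=\{x\}\circ V$ and $U\circ y=U\circ\{y\}$. We write $x^{\sim-}$ for $(x^\sim)^-$, etc. A DInFL-frame is a tuple $\mathbb W=(W,I,\preccurlyeq,\circ,{}^\sim,{}^-)$ where $W$ is a set, $I\subseteq W$, $\preccurlyeq$ is a partial order on $W$, $\circ:W\times W\to\mathcal P(W)$, and ${}^\sim,{}^-:W\to W$ are functions, such that for all $u,v,x,y,z\in W$: (F1) $x\preccurlyeq y$ iff $y\in I\circ x$ iff $y\in x\circ I$; (F2) if $x\preccurlyeq y$ and $x\in I$ then $y\in I$; (F3) if $x\preccurlyeq y$ and $x\in u\circ v$ then $y\in u\circ v$; (F4) $(x\circ y)\circ z=x\circ(y\circ z)$; (F5) $z^\sim\in x\circ y$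 iff $y^-\in z\circ x$; (F6) $x^{\sim-}\preccurlyeq x$ and $x^{-\sim}\preccurlyeq x$. An InFL-algebra is a structure $(A,\wedge,\vee,\cdot,1,\sim,-)$ with $(A,\wedge,\vee)$ a lattice, $(A,\cdot,1)$ a monoid, and for all $a,b,c$: $a\cdot b\leqslant c\iff a\leqslant -(b\cdot{\sim}c)\iff b\leqslant{\sim}(-c\cdot a)$. A DInFL-algebra is an InFL-algebra whose lattice reduct is distributive. *)

theory Defs
  imports Main
begin

text \<open>Frames are given relative to a carrier set W (a subset of a type 'a).
  The ternary relation is a map comp :: 'a => 'a => 'a set.\<close>

definition setcomp :: "('a \<Rightarrow> 'a \<Rightarrow> 'a set) \<Rightarrow> 'a set \<Rightarrow> 'a set \<Rightarrow> 'a set" where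
  "setcomp c U V = (\<Union>a\<in>U. \<Union>b\<in>V. c a b)"

definition partial_order_on_set :: "'a set \<Rightarrow> ('a \<Rightarrow> 'a \<Rightarrow> bool) \<Rightarrow> bool" where
  "partial_order_on_set W le \<longleftrightarrow>
     (\<forall>x\<in>W. le x x) \<and>
     (\<forall>x\<in>W. \<forall>y\<in>W. le x y \<and> le y x \<longrightarrow> x = y) \<and>
     (\<forall>x\<in>W. \<forall>y\<in>W. \<forall>z\<in>W. le x y \<and> le y z \<longrightarrow> le x z)"

definition DInFL_frame ::
  "'a set \<Rightarrow> 'a set \<Rightarrow> ('a \<Rightarrow> 'a \<Rightarrow> bool) \<Rightarrow> ('a \<Rightarrow> 'a \<Rightarrow> 'a set)
     \<Rightarrow> ('a \<Rightarrow> 'a) \<Rightarrow> ('a \<Rightarrow> 'a) \<Rightarrow> bool" where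
  "DInFL_frame W I le c tld mns \<longleftrightarrow>
     I \<subseteq> W \<and> partial_order_on_set W le \<and>
     (\<forall>x\<in>W. \<forall>y\<in>W. c x y \<subseteq> W) \<and>
     (\<forall>x\<in>W. tld x \<in> W) \<and> (\<forall>x\<in>W. mns x \<in> W) \<and>
     \<comment> \<open>F1\<close>
     (\<forall>x\<in>W. \<forall>y\<in>W. (le x y \<longleftrightarrow> y \<in> setcomp c I {x}) \<and>
                      (y \<in> setcomp c I {x} \<longleftrightarrow> y \<in> setcomp c {x} I)) \<and>
     \<comment> \<open>F2\<close>
     (\<forall>x\<in>W. \<forall>y\<in>W. le x y \<and> x \<in> I \<longrightarrow> y \<in> I) \<and>
     \<comment> \<open>F3\<close>
     (\<forall>u\<in>W. \<forall>v\<in>W. \<forall>x\<in>W. \<forall>y\<in>W. le x y \<and> x \<in> c u v \<longrightarrow> y \<in> c u v) \<and>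
     \<comment> \<open>F4\<close>
     (\<forall>x\<in>W. \<forall>y\<in>W. \<forall>z\<in>W.
        setcomp c (setcomp c {x} {y}) {z} = setcomp c {x} (setcomp c {y} {z})) \<and>
     \<comment> \<open>F5\<close>
     (\<forall>x\<in>W. \<forall>y\<in>W. \<forall>z\<in>W. tld z \<in> c x y \<longleftrightarrow> mns y \<in> c z x) \<and>
     \<comment> \<open>F6\<close>
     (\<forall>x\<in>W. le (mns (tld x)) x \<and> le (tld (mns x)) x)"

definition upsets :: "'a set \<Rightarrow> ('a \<Rightarrow> 'a \<Rightarrow> bool) \<Rightarrow> 'a set set" where
  "upsets W le = {U. U \<subseteq> W \<and> (\<forall>x\<in>U. \<forall>y\<in>W. le x y \<longrightarrow> y \<in> U)}"

definition up_tilde :: "'a set \<Rightarrow> ('a \<Rightarrow> 'a) \<Rightarrow> 'a set \<Rightarrow> 'a set" where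
  "up_tilde W mns U = {w\<in>W. mns w \<notin> U}"

definition up_minus :: "'a set \<Rightarrow> ('a \<Rightarrow> 'a) \<Rightarrow> 'a set \<Rightarrow> 'a set" where
  "up_minus W tld U = {w\<in>W. tld w \<notin> U}"

definition lattice_on :: "'b set \<Rightarrow> ('b \<Rightarrow> 'b \<Rightarrow> 'b) \<Rightarrow> ('b \<Rightarrow> 'b \<Rightarrow> 'b) \<Rightarrow> bool" where
  "lattice_on A meet join \<longleftrightarrow>
     (\<forall>a\<in>A. \<forall>b\<in>A. meet a b \<in> A \<and> join a b \<in> A) \<and>
     (\<forall>a\<in>A. \<forall>b\<in>A. meet a b = meet b a \<and> join a b = join b a) \<and>
     (\<forall>a\<in>A. \<forall>b\<in>A. \<forall>c\<in>A. meet (meet a b) c = meet a (meet b c) \<and>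
                            join (join a b) c = join a (join b c)) \<and>
     (\<forall>a\<in>A. \<forall>b\<in>A. meet a (join a b) = a \<and> join a (meet a b) = a)"

definition lat_le :: "('b \<Rightarrow> 'b \<Rightarrow> 'b) \<Rightarrow> 'b \<Rightarrow> 'b \<Rightarrow> bool" where
  "lat_le meet a b \<longleftrightarrow> meet a b = a"

definition monoid_on :: "'b set \<Rightarrow> ('b \<Rightarrow> 'b \<Rightarrow> 'b) \<Rightarrow> 'b \<Rightarrow> bool" where
  "monoid_on A dot one \<longleftrightarrow>
     one \<in> A \<and> (\<forall>a\<in>A. \<forall>b\<in>A. dot a b \<in> A) \<and>
     (\<forall>a\<in>A. \<forall>b\<in>A. \<forall>c\<in>A. dot (dot a b) c = dot a (dot b c)) \<and>
     (\<forall>a\<in>A. dot one a = a \<and> dot a one = a)"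

definition InFL_algebra ::
  "'b set \<Rightarrow> ('b \<Rightarrow> 'b \<Rightarrow> 'b) \<Rightarrow> ('b \<Rightarrow> 'b \<Rightarrow> 'b) \<Rightarrow> ('b \<Rightarrow> 'b \<Rightarrow> 'b) \<Rightarrow> 'b
     \<Rightarrow> ('b \<Rightarrow> 'b) \<Rightarrow> ('b \<Rightarrow> 'b) \<Rightarrow> bool" where
  "InFL_algebra A meet join dot one tld mns \<longleftrightarrow>
     lattice_on A meet join \<and> monoid_on A dot one \<and>
     (\<forall>a\<in>A. tld a \<in> A \<and> mns a \<in> A) \<and>
     (\<forall>a\<in>A. \<forall>b\<in>A. \<forall>c\<in>A.
        (lat_le meet (dot a b) c \<longleftrightarrow> lat_le meet a (mns (dot b (tld c)))) \<and>
        (lat_le meet a (mns (dot b (tld c))) \<longleftrightarrow> lat_le meet b (tld (dot (mns c) a))))"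

definition DInFL_algebra ::
  "'b set \<Rightarrow> ('b \<Rightarrow> 'b \<Rightarrow> 'b) \<Rightarrow> ('b \<Rightarrow> 'b \<Rightarrow> 'b) \<Rightarrow> ('b \<Rightarrow> 'b \<Rightarrow> 'b) \<Rightarrow> 'b
     \<Rightarrow> ('b \<Rightarrow> 'b) \<Rightarrow> ('b \<Rightarrow> 'b) \<Rightarrow> bool" where
  "DInFL_algebra A meet join dot one tld mns \<longleftrightarrow>
     InFL_algebra A meet join dot one tld mns \<and>
     (\<forall>a\<in>A. \<forall>b\<in>A. \<forall>c\<in>A. meet a (join b c) = join (meet a b) (meet a c))"

end

theory Submission
  imports Defs
begin

locale fr =
  fixes W I :: "'a set" and le :: "'a \<Rightarrow> 'a \<Rightarrow> bool"
    and c :: "'a \<Rightarrow> 'a \<Rightarrow> 'a set" and tld mns :: "'a \<Rightarrow> 'a"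
  assumes F: "DInFL_frame W I le c tld mns"
begin

lemma Fs: "I \<subseteq> W" "partial_order_on_set W le" "\<forall>x\<in>W. \<forall>y\<in>W. c x y \<subseteq> W"
  "\<forall>x\<in>W. tld x \<in> W" "\<forall>x\<in>W. mns x \<in> W"
  "\<forall>x\<in>W. \<forall>y\<in>W. (le x y \<longleftrightarrow> y \<in> setcomp c I {x}) \<and>
                      (y \<in> setcomp c I {x} \<longleftrightarrow> y \<in> setcomp c {x} I)"
  "\<forall>x\<in>W. \<forall>y\<in>W. le x y \<and> x \<in> I \<longrightarrow> y \<in> I"
  "\<forall>u\<in>W. \<forall>v\<in>W. \<forall>x\<in>W. \<forall>y\<in>W. le x y \<and> x \<in> c u v \<longrightarrow> y \<in> c u v"
  "\<forall>x\<in>W. \<forall>y\<in>W. \<forall>z\<in>W.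
        setcomp c (setcomp c {x} {y}) {z} = setcomp c {x} (setcomp c {y} {z})"
  "\<forall>x\<in>W. \<forall>y\<in>W. \<forall>z\<in>W. tld z \<in> c x y \<longleftrightarrow> mns y \<in> c z x"
  "\<forall>x\<in>W. le (mns (tld x)) x \<and> le (tld (mns x)) x"
  using F unfolding DInFL_frame_def apply -
  apply (elim conjE, assumption)+
  done

lemma IW: "I \<subseteq> W" using Fs(1) .
lemma refl: "x \<in> W \<Longrightarrow> le x x" using Fs(2) unfolding partial_order_on_set_def by blast
lemma antis: "x \<in> W \<Longrightarrow> y \<in> W \<Longrightarrow> le x y \<Longrightarrow> le y x \<Longrightarrow> x = y"
  using Fs(2) unfolding partial_order_on_set_def by blast
lemma cW: "x \<in> W \<Longrightarrow> y \<in> W \<Longrightarrow> c x y \<subseteq> W" using Fs(3) by blast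
lemma tW: "x \<in> W \<Longrightarrow> tld x \<in> W" using Fs(4) by blast
lemma mW: "x \<in> W \<Longrightarrow> mns x \<in> W" using Fs(5) by blast
lemma le1: "x \<in> W \<Longrightarrow> y \<in> W \<Longrightarrow> le x y \<longleftrightarrow> (\<exists>i\<in>I. y \<in> c i x)"
  using Fs(6) unfolding setcomp_def by blast
lemma le2: "x \<in> W \<Longrightarrow> y \<in> W \<Longrightarrow> le x y \<longleftrightarrow> (\<exists>i\<in>I. y \<in> c x i)"
  using Fs(6) unfolding setcomp_def by blast
lemma F2: "x \<in> W \<Longrightarrow> y \<in> W \<Longrightarrow> le x y \<Longrightarrow> x \<in> I \<Longrightarrow> y \<in> I"
  using Fs(7) by blast
lemma F3: "u \<in> W \<Longrightarrow> v \<in> W \<Longrightarrow> x \<in> W \<Longrightarrow> y \<in> W \<Longrightarrow> le x y \<Longrightarrow> x \<in> c u v \<Longrightarrow> y \<in> c u v"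
  using Fs(8) by blast
lemma F4: "x \<in> W \<Longrightarrow> y \<in> W \<Longrightarrow> z \<in> W \<Longrightarrow>
        setcomp c (setcomp c {x} {y}) {z} = setcomp c {x} (setcomp c {y} {z})"
  using Fs(9) by blast
lemma F5: "x \<in> W \<Longrightarrow> y \<in> W \<Longrightarrow> z \<in> W \<Longrightarrow> tld z \<in> c x y \<longleftrightarrow> mns y \<in> c z x"
  using Fs(10) by blast
lemma F6: "x \<in> W \<Longrightarrow> le (mns (tld x)) x \<and> le (tld (mns x)) x"
  using Fs(11) by blast

lemma tm: assumes "y \<in> W" shows "tld (mns y) = y"
proof -
  obtain i where i: "i \<in> I" "mns y \<in> c (mns y) i" using le2[of "mns y" "mns y"] refl mW assms by blast
  have "i \<in> W" using i IW by blast
  then have "tld (mns y) \<in> c i y" using F5[of i y "mns y"] i assms mW by blast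
  then have h1: "le y (tld (mns y))" using le1[of y "tld (mns y)"] i assms tW mW by blast
  moreover have h2: "le (tld (mns y)) y" using F6 assms by blast
  moreover have h3: "tld (mns y) \<in> W" using assms tW mW by simp
  show ?thesis by (rule antis[OF h3 assms h2 h1])
qed

lemma mt: assumes "y \<in> W" shows "mns (tld y) = y"
proof -
  obtain i where i: "i \<in> I" "tld y \<in> c i (tld y)" using le1[of "tld y" "tld y"] refl tW assms by blast
  have "i \<in> W" using i IW by blast
  then have "mns (tld y) \<in> c y i" using F5[of i "tld y" y] i assms tW by blast
  then have h1: "le y (mns (tld y))" using le2[of y "mns (tld y)"] i assms tW mW by blast
  moreover have h2: "le (mns (tld y)) y" using F6 assms by blast
  moreover have h3: "mns (tld y) \<in> W" using assms tW mW by simp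
  show ?thesis by (rule antis[OF h3 assms h2 h1])
qed

lemma mns_anti: assumes "x \<in> W" "y \<in> W" "le x y" shows "le (mns y) (mns x)"
proof -
  obtain i where i: "i \<in> I" "y \<in> c i x" using le1 assms by blast
  have "i \<in> W" using i IW by blast
  then have "mns x \<in> c (mns y) i" using F5[of i x "mns y"] i assms tm mW by simp
  then show ?thesis using le2 i assms mW by blast
qed

lemma tld_anti: assumes "x \<in> W" "y \<in> W" "le x y" shows "le (tld y) (tld x)"
proof -
  obtain i where i: "i \<in> I" "y \<in> c x i" using le2 assms by blast
  have "i \<in> W" using i IW by blast
  then have "tld x \<in> c i (tld y)" using F5[of i "tld y" x] i assms mt tW by simp
  then show ?thesis using le1 i assms tW by blast
qed

abbreviation "UP \<equiv> upsets W le"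

lemma upD: "U \<in> UP \<Longrightarrow> U \<subseteq> W" unfolding upsets_def by blast
lemma upD2: "U \<in> UP \<Longrightarrow> x \<in> U \<Longrightarrow> y \<in> W \<Longrightarrow> le x y \<Longrightarrow> y \<in> U" unfolding upsets_def by blast

lemma sc_W: "U \<subseteq> W \<Longrightarrow> V \<subseteq> W \<Longrightarrow> setcomp c U V \<subseteq> W"
  unfolding setcomp_def using cW by blast

lemma up_int: "U \<in> UP \<Longrightarrow> V \<in> UP \<Longrightarrow> U \<inter> V \<in> UP" unfolding upsets_def by blast
lemma up_un: "U \<in> UP \<Longrightarrow> V \<in> UP \<Longrightarrow> U \<union> V \<in> UP" unfolding upsets_def by blast
lemma up_sc: "U \<in> UP \<Longrightarrow> V \<in> UP \<Longrightarrow> setcomp c U V \<in> UP"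
proof -
  assume a: "U \<in> UP" "V \<in> UP"
  have "setcomp c U V \<subseteq> W" using sc_W upD a by blast
  moreover have "\<forall>x\<in>setcomp c U V. \<forall>y\<in>W. le x y \<longrightarrow> y \<in> setcomp c U V"
  proof (intro ballI impI)
    fix x y assume x: "x \<in> setcomp c U V" and y: "y \<in> W" "le x y"
    then obtain u v where uv: "u \<in> U" "v \<in> V" "x \<in> c u v" unfolding setcomp_def by blast
    have "u \<in> W" "v \<in> W" using uv a upD by blast+
    then have "x \<in> W" using cW uv by blast
    then have "y \<in> c u v" using F3 uv y \<open>u \<in> W\<close> \<open>v \<in> W\<close> by blast
    then show "y \<in> setcomp c U V" using uv unfolding setcomp_def by blast
  qed
  ultimately show ?thesis unfolding upsets_def by blast
qed

lemma up_t: "U \<in> UP \<Longrightarrow> up_tilde W mns U \<in> UP"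
  unfolding upsets_def up_tilde_def using mns_anti mW by blast
lemma up_m: "U \<in> UP \<Longrightarrow> up_minus W tld U \<in> UP"
  unfolding upsets_def up_minus_def using tld_anti tW by blast
lemma up_I: "I \<in> UP" unfolding upsets_def using IW F2 by blast

lemma sc_single: "setcomp c U V = (\<Union>u\<in>U. \<Union>v\<in>V. setcomp c {u} {v})"
  unfolding setcomp_def by blast

lemma sc_assoc: assumes "U \<subseteq> W" "V \<subseteq> W" "Z \<subseteq> W"
  shows "setcomp c (setcomp c U V) Z = setcomp c U (setcomp c V Z)"
proof -
  have "setcomp c (setcomp c U V) Z = (\<Union>u\<in>U. \<Union>v\<in>V. \<Union>z\<in>Z. setcomp c (setcomp c {u} {v}) {z})"
    unfolding setcomp_def by auto
  also have "\<dots> = (\<Union>u\<in>U. \<Union>v\<in>V. \<Union>z\<in>Z. setcomp c {u} (setcomp c {v} {z}))"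
  proof -
    have "\<And>u v z. u \<in> U \<Longrightarrow> v \<in> V \<Longrightarrow> z \<in> Z \<Longrightarrow>
      setcomp c (setcomp c {u} {v}) {z} = setcomp c {u} (setcomp c {v} {z})"
      using F4 assms by blast
    then show ?thesis by simp
  qed
  also have "\<dots> = setcomp c U (setcomp c V Z)"
    unfolding setcomp_def by auto
  finally show ?thesis .
qed

lemma I_left: "U \<in> UP \<Longrightarrow> setcomp c I U = U"
proof
  assume a: "U \<in> UP"
  show "setcomp c I U \<subseteq> U"
  proof
    fix y assume "y \<in> setcomp c I U"
    then obtain i x where ix: "i \<in> I" "x \<in> U" "y \<in> c i x" unfolding setcomp_def by blast
    have "x \<in> W" "i \<in> W" using ix a upD IW by blast+
    then have "y \<in> W" using cW ix by blast
    then have "le x y" using le1 ix \<open>x \<in> W\<close> by blast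
    then show "y \<in> U" using upD2 a ix \<open>y \<in> W\<close> by blast
  qed
  show "U \<subseteq> setcomp c I U"
  proof
    fix x assume x: "x \<in> U"
    then have "x \<in> W" using a upD by blast
    then obtain i where "i \<in> I" "x \<in> c i x" using le1 refl by blast
    then show "x \<in> setcomp c I U" using x unfolding setcomp_def by blast
  qed
qed

lemma I_right: "U \<in> UP \<Longrightarrow> setcomp c U I = U"
proof
  assume a: "U \<in> UP"
  show "setcomp c U I \<subseteq> U"
  proof
    fix y assume "y \<in> setcomp c U I"
    then obtain i x where ix: "i \<in> I" "x \<in> U" "y \<in> c x i" unfolding setcomp_def by blast
    have "x \<in> W" "i \<in> W" using ix a upD IW by blast+
    then have "y \<in> W" using cW ix by blast
    then have "le x y" using le2 ix \<open>x \<in> W\<close> by blast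
    then show "y \<in> U" using upD2 a ix \<open>y \<in> W\<close> by blast
  qed
  show "U \<subseteq> setcomp c U I"
  proof
    fix x assume x: "x \<in> U"
    then have "x \<in> W" using a upD by blast
    then obtain i where "i \<in> I" "x \<in> c x i" using le2 refl by blast
    then show "x \<in> setcomp c U I" using x unfolding setcomp_def by blast
  qed
qed

lemma res1: assumes "U \<in> UP" "V \<in> UP" "Z \<in> UP"
  shows "setcomp c U V \<subseteq> Z \<longleftrightarrow> U \<subseteq> up_minus W tld (setcomp c V (up_tilde W mns Z))"
proof -
  have UW: "U \<subseteq> W" and VW: "V \<subseteq> W" and ZW: "Z \<subseteq> W" using assms upD by auto
  have "U \<subseteq> up_minus W tld (setcomp c V (up_tilde W mns Z)) \<longleftrightarrow>
      (\<forall>u\<in>U. \<forall>v\<in>V. \<forall>z\<in>W. tld u \<in> c v z \<longrightarrow> mns z \<in> Z)"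
    using UW unfolding up_minus_def up_tilde_def setcomp_def by blast
  also have "\<dots> \<longleftrightarrow> (\<forall>u\<in>U. \<forall>v\<in>V. \<forall>z\<in>W. mns z \<in> c u v \<longrightarrow> mns z \<in> Z)"
    using F5 UW VW by blast
  also have "\<dots> \<longleftrightarrow> (\<forall>u\<in>U. \<forall>v\<in>V. c u v \<subseteq> Z)"
  proof -
    have "(\<forall>z\<in>W. mns z \<in> c u v \<longrightarrow> mns z \<in> Z) \<longleftrightarrow> c u v \<subseteq> Z" if "u \<in> W" "v \<in> W" for u v
    proof
      assume h: "\<forall>z\<in>W. mns z \<in> c u v \<longrightarrow> mns z \<in> Z"
      show "c u v \<subseteq> Z"
      proof
        fix w assume w: "w \<in> c u v"
        then have "w \<in> W" using cW that by blast
        then show "w \<in> Z" using h[rule_format, of "tld w"] w mt tW by simp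
      qed
    qed blast
    then show ?thesis using UW VW by blast
  qed
  also have "\<dots> \<longleftrightarrow> setcomp c U V \<subseteq> Z" unfolding setcomp_def by blast
  finally show ?thesis by simp
qed

lemma res2: assumes "U \<in> UP" "V \<in> UP" "Z \<in> UP"
  shows "setcomp c U V \<subseteq> Z \<longleftrightarrow> V \<subseteq> up_tilde W mns (setcomp c (up_minus W tld Z) U)"
proof -
  have UW: "U \<subseteq> W" and VW: "V \<subseteq> W" and ZW: "Z \<subseteq> W" using assms upD by auto
  have "V \<subseteq> up_tilde W mns (setcomp c (up_minus W tld Z) U) \<longleftrightarrow>
      (\<forall>u\<in>U. \<forall>v\<in>V. \<forall>z\<in>W. mns v \<in> c z u \<longrightarrow> tld z \<in> Z)"
    using VW unfolding up_minus_def up_tilde_def setcomp_def by blast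
  also have "\<dots> \<longleftrightarrow> (\<forall>u\<in>U. \<forall>v\<in>V. \<forall>z\<in>W. tld z \<in> c u v \<longrightarrow> tld z \<in> Z)"
    using F5 UW VW by blast
  also have "\<dots> \<longleftrightarrow> (\<forall>u\<in>U. \<forall>v\<in>V. c u v \<subseteq> Z)"
  proof -
    have "(\<forall>z\<in>W. tld z \<in> c u v \<longrightarrow> tld z \<in> Z) \<longleftrightarrow> c u v \<subseteq> Z" if "u \<in> W" "v \<in> W" for u v
    proof
      assume h: "\<forall>z\<in>W. tld z \<in> c u v \<longrightarrow> tld z \<in> Z"
      show "c u v \<subseteq> Z"
      proof
        fix w assume w: "w \<in> c u v"
        then have "w \<in> W" using cW that by blast
        then show "w \<in> Z" using h[rule_format, of "mns w"] w tm mW by simp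
      qed
    qed blast
    then show ?thesis using UW VW by blast
  qed
  also have "\<dots> \<longleftrightarrow> setcomp c U V \<subseteq> Z" unfolding setcomp_def by blast
  finally show ?thesis by simp
qed

lemma main: "DInFL_algebra UP (\<inter>) (\<union>) (setcomp c) I (up_tilde W mns) (up_minus W tld)"
proof -
  have lat: "lattice_on UP (\<inter>) (\<union>)"
    unfolding lattice_on_def using up_int up_un by blast
  have mon: "monoid_on UP (setcomp c) I"
    unfolding monoid_on_def using up_I up_sc sc_assoc upD I_left I_right by simp
  have le_eq: "lat_le (\<inter>) A B \<longleftrightarrow> A \<subseteq> B" for A B :: "'a set"
    unfolding lat_le_def by blast
  have "InFL_algebra UP (\<inter>) (\<union>) (setcomp c) I (up_tilde W mns) (up_minus W tld)"
    unfolding InFL_algebra_def le_eq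
  proof (intro conjI lat mon ballI)
    fix a b z assume ab: "a \<in> UP" "b \<in> UP" "z \<in> UP"
    show "(setcomp c a b \<subseteq> z) = (a \<subseteq> up_minus W tld (setcomp c b (up_tilde W mns z)))"
      using res1[OF ab] .
    show "(a \<subseteq> up_minus W tld (setcomp c b (up_tilde W mns z))) =
          (b \<subseteq> up_tilde W mns (setcomp c (up_minus W tld z) a))"
      using res1[OF ab] res2[OF ab] by simp
  next
    fix a assume "a \<in> UP"
    then show "up_tilde W mns a \<in> UP" "up_minus W tld a \<in> UP" using up_t up_m by auto
  qed
  then show ?thesis unfolding DInFL_algebra_def by blast
qed

end

theorem mainTheorem4:
  fixes W I :: "'a set" and le :: "'a \<Rightarrow> 'a \<Rightarrow> bool"
    and c :: "'a \<Rightarrow> 'a \<Rightarrow> 'a set" and tld mns :: "'a \<Rightarrow> 'a"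
  assumes "DInFL_frame W I le c tld mns"
  shows "(\<forall>U\<in>upsets W le. \<forall>V\<in>upsets W le.
            U \<inter> V \<in> upsets W le \<and> U \<union> V \<in> upsets W le \<and> setcomp c U V \<in> upsets W le)
       \<and> (\<forall>U\<in>upsets W le. up_tilde W mns U \<in> upsets W le \<and> up_minus W tld U \<in> upsets W le)
       \<and> I \<in> upsets W le
       \<and> DInFL_algebra (upsets W le) (\<inter>) (\<union>) (setcomp c) I (up_tilde W mns) (up_minus W tld)"
proof -
  interpret fr W I le c tld mns using assms by unfold_locales
  show ?thesis using up_int up_un up_sc up_t up_m up_I main by simp
qed

end
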